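(* Let $(\mathcal{K},[\cdot,\cdot])$ be a Krein space with fundamental symmetry $J$ and let $\{k_n\}_{n\in\mathfrak{N}}$ ($\mathfrak{N}$ a countable index set) be a tight frame for the Krein space $\mathcal{K}$ with frame bounds $A=B=1$, i.e. $\sum_{n\in\mathfrak{N}}|[k_n,k]|^2=\|k\|_J^2$ for all $k\in\mathcal{K}$. Assume that $|[k_n,k_n]|=1$ for all $n\in\mathfrak{N}$. Then $\{k_n\}_{n\in\mathfrak{N}}$ is a $J$-orthonormal basis for $\mathcal{K}$.
   Context: A Krein space $(\mathcal{K},[\cdot,\cdot])$ has a fundamental decomposition $\mathcal{K}=\mathcal{K}_+\oplus\mathcal{K}_-$ and fundamental symmetry $J(k^++k^-)=k^+-k^-$, such that $[h,k]_J:=[h,Jk]$ is a positive definite inner product making $\mathcal{K}$ a Hilbert space; $\|k\|_J:=\sqrt{[k,k]_J}$. A $J$-orthonormal basis is a complete family $\{e_n\}_{n\in\mathfrak{N}}\subset\mathcal{K}$ (its closed linear span is $\mathcal{K}$) such that $[e_n,e_m]=0$ for $n\neq m$ and $|[e_n,e_n]|=1$ for all $n$. *)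

theory Defs
  imports "HOL-Analysis.Analysis"
begin

text \<open>The fundamental decomposition is K+ = {x. J x = x}, K- = {x. J x = -x}
  (every x = (x + J x)/2 + (x - J x)/2); K+ and K- are [.,.]-orthogonal,
  K+ is positive and K- is negative, and the space is complete (Hilbert) in the
  J-norm sqrt [x, J x].\<close>

definition J_norm :: "('a \<Rightarrow> 'a \<Rightarrow> complex) \<Rightarrow> ('a \<Rightarrow> 'a) \<Rightarrow> 'a \<Rightarrow> real" where
  "J_norm ip J x = sqrt (Re (ip x (J x)))"

definition krein_space ::
  "(complex \<Rightarrow> 'a::ab_group_add \<Rightarrow> 'a) \<Rightarrow> ('a \<Rightarrow> 'a \<Rightarrow> complex) \<Rightarrow> ('a \<Rightarrow> 'a) \<Rightarrow> bool" where
  "krein_space sc ip J \<longleftrightarrow>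
     module sc \<and>
     (\<forall>x y z. ip (x + y) z = ip x z + ip y z) \<and>
     (\<forall>c x y. ip (sc c x) y = c * ip x y) \<and>
     (\<forall>x y. ip x y = cnj (ip y x)) \<and>
     (\<forall>x y. J (x + y) = J x + J y) \<and>
     (\<forall>c x. J (sc c x) = sc c (J x)) \<and>
     (\<forall>x. J (J x) = x) \<and>
     (\<forall>x y. J x = x \<longrightarrow> J y = - y \<longrightarrow> ip x y = 0) \<and>
     (\<forall>x. J x = x \<longrightarrow> x \<noteq> 0 \<longrightarrow> Re (ip x x) > 0) \<and>
     (\<forall>x. J x = - x \<longrightarrow> x \<noteq> 0 \<longrightarrow> Re (ip x x) < 0) \<and>
     (\<forall>X::nat \<Rightarrow> 'a. (\<forall>e>0. \<exists>N. \<forall>m\<ge>N. \<forall>n\<ge>N. J_norm ip J (X m - X n) < e) \<longrightarrow>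
         (\<exists>L. (\<lambda>n. J_norm ip J (X n - L)) \<longlonglongrightarrow> 0))"

definition J_closure :: "('a::ab_group_add \<Rightarrow> 'a \<Rightarrow> complex) \<Rightarrow> ('a \<Rightarrow> 'a) \<Rightarrow> 'a set \<Rightarrow> 'a set" where
  "J_closure ip J S = {x. \<forall>e>0. \<exists>y\<in>S. J_norm ip J (x - y) < e}"

definition J_orthonormal_basis ::
  "(complex \<Rightarrow> 'a::ab_group_add \<Rightarrow> 'a) \<Rightarrow> ('a \<Rightarrow> 'a \<Rightarrow> complex) \<Rightarrow> ('a \<Rightarrow> 'a)
     \<Rightarrow> 'i set \<Rightarrow> ('i \<Rightarrow> 'a) \<Rightarrow> bool" where
  "J_orthonormal_basis sc ip J N e \<longleftrightarrow>
     J_closure ip J (module.span sc (e ` N)) = UNIV \<and>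
     (\<forall>n\<in>N. \<forall>m\<in>N. n \<noteq> m \<longrightarrow> ip (e n) (e m) = 0) \<and>
     (\<forall>n\<in>N. cmod (ip (e n) (e n)) = 1)"

end

theory Submission
  imports Defs
begin

lemma hs_diff_fin:
  fixes f :: "'i \<Rightarrow> real"
  assumes "(f has_sum S) N" "finite F" "F \<subseteq> N" "\<And>n. 0 \<le> f n"
  shows "(f has_sum (S - sum f F)) (N - F)" "0 \<le> S - sum f F"
proof -
  show h: "(f has_sum (S - sum f F)) (N - F)"
    using has_sum_Diff[OF assms(1) has_sum_finite[OF assms(2)] assms(3)] .
  show "0 \<le> S - sum f F" using has_sum_nonneg[OF h] assms(4) by auto
qed

lemma hs_term_le:
  fixes f :: "'i \<Rightarrow> real"
  assumes "(f has_sum S) N" "m \<in> N" "\<And>n. 0 \<le> f n"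
  shows "f m \<le> S"
  using hs_diff_fin(2)[OF assms(1), of "{m}"] assms by auto

context
  fixes sc :: "complex \<Rightarrow> 'a::ab_group_add \<Rightarrow> 'a" and ip J
  assumes K: "krein_space sc ip J"
begin

lemma addL: "ip (x+y) z = ip x z + ip y z" using K[unfolded krein_space_def, THEN conjunct2, THEN conjunct1] by blast
lemma herm: "ip x y = cnj (ip y x)" using K[unfolded krein_space_def, THEN conjunct2, THEN conjunct2, THEN conjunct2, THEN conjunct1] by blast
lemma Jadd: "J (x+y) = J x + J y" using K[unfolded krein_space_def, THEN conjunct2, THEN conjunct2, THEN conjunct2, THEN conjunct2, THEN conjunct1] by blast
lemma JJ: "J (J x) = x" using K[unfolded krein_space_def, THEN conjunct2, THEN conjunct2, THEN conjunct2, THEN conjunct2, THEN conjunct2, THEN conjunct2, THEN conjunct1] by blast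
lemma orth: "J x = x \<Longrightarrow> J y = - y \<Longrightarrow> ip x y = 0" using K[unfolded krein_space_def, THEN conjunct2, THEN conjunct2, THEN conjunct2, THEN conjunct2, THEN conjunct2, THEN conjunct2, THEN conjunct2, THEN conjunct1] by blast
lemma pos: "J x = x \<Longrightarrow> x \<noteq> 0 \<Longrightarrow> Re (ip x x) > 0" using K[unfolded krein_space_def, THEN conjunct2, THEN conjunct2, THEN conjunct2, THEN conjunct2, THEN conjunct2, THEN conjunct2, THEN conjunct2, THEN conjunct2, THEN conjunct1] by blast
lemma neg: "J x = - x \<Longrightarrow> x \<noteq> 0 \<Longrightarrow> Re (ip x x) < 0" using K[unfolded krein_space_def, THEN conjunct2, THEN conjunct2, THEN conjunct2, THEN conjunct2, THEN conjunct2, THEN conjunct2, THEN conjunct2, THEN conjunct2, THEN conjunct2, THEN conjunct1] by blast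
lemma scL: "ip (sc c x) y = c * ip x y" using K[unfolded krein_space_def, THEN conjunct2, THEN conjunct2, THEN conjunct1] by blast
lemma modK: "module sc" using K[unfolded krein_space_def, THEN conjunct1] by blast

lemma addR: "ip x (y+z) = ip x y + ip x z"
proof -
  have "ip x (y+z) = cnj (ip (y+z) x)" by (rule herm)
  also have "\<dots> = cnj (ip y x) + cnj (ip z x)" by (simp add: addL)
  also have "\<dots> = ip x y + ip x z" using herm[of x y] herm[of x z] by simp
  finally show ?thesis .
qed
lemma ip0L: "ip 0 z = 0" using addL[of 0 0 z] by simp
lemma negL: "ip (-x) z = - ip x z" using addL[of x "-x" z] ip0L by (simp add: eq_neg_iff_add_eq_0 add.commute)
lemma diffL: "ip (x-y) z = ip x z - ip y z" by (simp only: diff_conv_add_uminus addL negL)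
lemma negR: "ip z (-x) = - ip z x"
proof -
  have "ip z (-x) = cnj (ip (-x) z)" by (rule herm)
  also have "\<dots> = - cnj (ip x z)" by (simp add: negL)
  also have "\<dots> = - ip z x" using herm[of z x] by simp
  finally show ?thesis .
qed
lemma diffR: "ip z (x-y) = ip z x - ip z y" by (simp only: diff_conv_add_uminus addR negR)
lemma sumL: "ip (sum f F) z = (\<Sum>i\<in>F. ip (f i) z)"
  by (induct F rule: infinite_finite_induct) (simp_all add: ip0L addL)
lemma J0: "J 0 = 0" using Jadd[of 0 0] by simp
lemma Jneg: "J (-x) = - J x" using Jadd[of x "-x"] J0 by (simp add: eq_neg_iff_add_eq_0 add.commute)
lemma Jdiff: "J (x - y) = J x - J y" by (simp only: diff_conv_add_uminus Jadd Jneg)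

lemma real_pos_part:
  assumes "J p = p" shows "Im (ip p p) = 0" "0 \<le> Re (ip p p)"
proof -
  have h: "ip p p = cnj (ip p p)" by (rule herm)
  show "Im (ip p p) = 0" using arg_cong[OF h, of Im] by simp
  show "0 \<le> Re (ip p p)"
  proof (cases "p = 0")
    case True thus ?thesis by (simp add: ip0L)
  next
    case False thus ?thesis using pos[OF assms] by fastforce
  qed
qed

lemma real_neg_part:
  assumes "J q = - q" shows "Im (ip q q) = 0" "Re (ip q q) \<le> 0"
proof -
  have h: "ip q q = cnj (ip q q)" by (rule herm)
  show "Im (ip q q) = 0" using arg_cong[OF h, of Im] by simp
  show "Re (ip q q) \<le> 0"
  proof (cases "q = 0")
    case True thus ?thesis by (simp add: ip0L)
  next
    case False thus ?thesis using neg[OF assms] by fastforce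
  qed
qed

lemma key: "cmod (ip x x) \<le> Re (ip x (J x))"
proof -
  define p where "p = x + J x"
  define q where "q = x - J x"
  have Jp: "J p = p" unfolding p_def by (simp add: Jadd JJ add.commute)
  have Jq: "J q = - q" unfolding q_def by (simp add: Jdiff JJ)
  have pq: "ip p q = 0" by (rule orth[OF Jp Jq])
  have qp: "ip q p = 0" using herm[of q p] pq by simp
  have h1: "x + x = p + q" unfolding p_def q_def by simp
  have h2: "J x + J x = p - q" unfolding p_def q_def by simp
  have e1: "ip (x+x) (x+x) = 4 * ip x x" by (simp add: addL addR)
  have e2: "ip (x+x) (J x + J x) = 4 * ip x (J x)" by (simp add: addL addR)
  have e3: "ip (p+q) (p+q) = ip p p + ip q q" by (simp add: addL addR pq qp)
  have e4: "ip (p+q) (p-q) = ip p p - ip q q" by (simp add: addL diffR pq qp)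
  have A: "4 * ip x x = ip p p + ip q q" using e1 e3 h1 by simp
  have B: "4 * ip x (J x) = ip p p - ip q q" using e2 e4 h1 h2 by simp
  note P = real_pos_part[OF Jp] and Q = real_neg_part[OF Jq]
  have cP: "cmod (ip p p) = Re (ip p p)" using P by (simp add: cmod_def)
  have cQ: "cmod (ip q q) = - Re (ip q q)" using Q by (simp add: cmod_def)
  have "cmod (4 * ip x x) \<le> cmod (ip p p) + cmod (ip q q)" unfolding A by (rule norm_triangle_ineq)
  also have "\<dots> = Re (4 * ip x (J x))" using B cP cQ by simp
  finally show ?thesis by (simp add: norm_mult)
qed

lemma Re_nonneg: "0 \<le> Re (ip x (J x))" using key[of x] norm_ge_zero[of "ip x x"] by linarith

lemma Jnorm_sq: "(J_norm ip J x)^2 = Re (ip x (J x))"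
  unfolding J_norm_def using Re_nonneg by simp

lemma ReJJ: "Re (ip (J x) (J (J x))) = Re (ip x (J x))"
  using herm[of "J x" x] by (simp add: JJ)

end

theorem proposition3p9:
  fixes sc :: "complex \<Rightarrow> 'a::ab_group_add \<Rightarrow> 'a"
    and ip :: "'a \<Rightarrow> 'a \<Rightarrow> complex"
    and J :: "'a \<Rightarrow> 'a"
    and N :: "'i set"
    and k :: "'i \<Rightarrow> 'a"
  assumes "krein_space sc ip J"
    and "countable N"
    and "\<And>x. ((\<lambda>n. (cmod (ip (k n) x))\<^sup>2) has_sum (J_norm ip J x)\<^sup>2) N"
    and "\<And>n. n \<in> N \<Longrightarrow> cmod (ip (k n) (k n)) = 1"
  shows "J_orthonormal_basis sc ip J N k"
proof -
  note K = assms(1)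
  have fs: "((\<lambda>n. (cmod (ip (k n) x))^2) has_sum Re (ip x (J x))) N" for x
    using assms(3)[of x] Jnorm_sq[OF K] by simp
  have nn: "\<And>x n. 0 \<le> (cmod (ip (k n) x))^2" by simp
  have r1: "Re (ip (k m) (J (k m))) = 1" if m: "m \<in> N" for m
  proof -
    define r where "r = Re (ip (k m) (J (k m)))"
    have "(cmod (ip (k m) (k m)))^2 \<le> r"
      using hs_term_le[OF fs[of "k m"] m nn] unfolding r_def .
    hence ge: "1 \<le> r" using assms(4)[OF m] by simp
    have "(cmod (ip (k m) (J (k m))))^2 \<le> r"
      using hs_term_le[OF fs[of "J (k m)"] m nn] ReJJ[OF K] unfolding r_def by simp
    moreover have "r \<le> cmod (ip (k m) (J (k m)))" unfolding r_def using complex_Re_le_cmod .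
    hence "r^2 \<le> (cmod (ip (k m) (J (k m))))^2" using ge by (intro power_mono) auto
    ultimately have "r^2 \<le> r" by linarith
    hence "r \<le> 1" using ge by (simp add: power2_eq_square)
    with ge show ?thesis unfolding r_def by simp
  qed
  have orthk: "ip (k n) (k m) = 0" if "n \<in> N" "m \<in> N" "n \<noteq> m" for n m
  proof -
    have h: "((\<lambda>n. (cmod (ip (k n) (k m)))^2) has_sum (1 - 1)) (N - {m})"
      using hs_diff_fin(1)[OF fs[of "k m"], of "{m}"] that r1 assms(4) by simp
    have "(cmod (ip (k n) (k m)))^2 \<le> 1 - 1"
      using hs_term_le[OF h _ nn] that by simp
    thus ?thesis by simp
  qed
  have clos: "x \<in> J_closure ip J (module.span sc (k ` N))" for x
    unfolding J_closure_def
  proof (intro CollectI allI impI)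
    fix e :: real assume e: "e > 0"
    define f where "f n = (cmod (ip (k n) x))^2" for n
    define S where "S = Re (ip x (J x))"
    have fsx: "(f has_sum S) N" using fs[of x] unfolding f_def S_def .
    have "\<forall>\<^sub>F F in finite_subsets_at_top N. dist (sum f F) S < e^2"
      using fsx e unfolding has_sum_def tendsto_iff by simp
    then obtain F where F: "finite F" "F \<subseteq> N" "dist (sum f F) S < e^2"
      unfolding eventually_finite_subsets_at_top by blast
    define c where "c n = ip x (k n) / ip (k n) (k n)" for n
    define s where "s = (\<Sum>n\<in>F. sc (c n) (k n))"
    define y where "y = x - s"
    have sspan: "s \<in> module.span sc (k ` N)"
      unfolding s_def using F(2)
      by (intro module.span_sum[OF modK[OF K]] module.span_scale[OF modK[OF K]] module.span_base[OF modK[OF K]]) auto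
    have ipy: "ip y (k m) = ip x (k m) - (\<Sum>n\<in>F. c n * ip (k n) (k m))" for m
      unfolding y_def s_def by (simp add: diffL[OF K] sumL[OF K] scL[OF K])
    have yF: "ip y (k m) = 0" if "m \<in> F" for m
    proof -
      have "(\<Sum>n\<in>F. c n * ip (k n) (k m)) = c m * ip (k m) (k m) + (\<Sum>n\<in>F-{m}. c n * ip (k n) (k m))"
        using F that by (simp add: sum.remove)
      also have "(\<Sum>n\<in>F-{m}. c n * ip (k n) (k m)) = 0"
        using F that orthk by (intro sum.neutral) auto
      also have "c m * ip (k m) (k m) = ip x (k m)"
        using assms(4)[of m] F that unfolding c_def by (auto simp: field_simps)
      finally show ?thesis using ipy[of m] by simp
    qed
    have yNF: "ip y (k m) = ip x (k m)" if "m \<in> N - F" for m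
    proof -
      have "(\<Sum>n\<in>F. c n * ip (k n) (k m)) = 0"
        using F that orthk by (intro sum.neutral) auto
      thus ?thesis using ipy[of m] by simp
    qed
    define g where "g n = (cmod (ip (k n) y))^2" for n
    define T where "T = Re (ip y (J y))"
    have gc: "g n = (cmod (ip y (k n)))^2" for n
      unfolding g_def using herm[OF K, of "k n" y] by simp
    have gs: "(g has_sum T) N" using fs[of y] unfolding g_def T_def .
    have gF: "sum g F = 0" using yF unfolding gc by simp
    have g1: "(g has_sum T) (N - F)"
      using hs_diff_fin(1)[OF gs F(1) F(2)] gF unfolding g_def by simp
    have fg: "f n = g n" if "n \<in> N - F" for n
    proof -
      have "f n = (cmod (ip x (k n)))^2" unfolding f_def using herm[OF K, of "k n" x] by simp
      thus ?thesis unfolding gc using yNF[OF that] by simp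
    qed
    have "(f has_sum T) (N - F)"
      using g1 has_sum_cong[of "N - F" f g T] fg by blast
    moreover have "(f has_sum (S - sum f F)) (N - F)"
      using hs_diff_fin(1)[OF fsx F(1) F(2)] unfolding f_def by simp
    ultimately have "T = S - sum f F" by (rule has_sum_unique)
    hence Tl: "T < e^2" using F(3) by (simp add: dist_real_def)
    have "(J_norm ip J y)^2 < e^2" using Tl Jnorm_sq[OF K] unfolding T_def by simp
    hence "J_norm ip J y < e" using e by (meson power2_less_imp_less less_imp_le)
    thus "\<exists>z\<in>module.span sc (k ` N). J_norm ip J (x - z) < e"
      using sspan unfolding y_def by blast
  qed
  have "J_closure ip J (module.span sc (k ` N)) = UNIV" using clos by auto
  thus ?thesis unfolding J_orthonormal_basis_def using orthk assms(4) by simp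
qed

end
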